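(* Let $1<v_0<n$ and let $(C,\mathfrak p,\mathfrak d)$ be a regular $q$-cycle coalgebra with $\mathfrak d=\mathfrak p$, $\mathfrak p_{10}^1=1$, $\mathfrak p_{1i}^1=0$ for $0<i<v_0$, and $\mathfrak p_{1,v_0}^1\ne0$. Then $\mathfrak p_{j0}^k=\delta_{kj}$ for all $j,k\in\{0,\dots,n-1\}$.
   Context: $K$ is an algebraically closed field of characteristic $0$ and $n\ge2$. $C$ is the coalgebra dual to $K[y]/\langle y^n\rangle$: basis $x_0,\dots,x_{n-1}$, $\Delta(x_i)=\sum_{j+k=i}x_j\otimes x_k$, $\epsilon(x_i)=\delta_{i0}$; $C\otimes C$ has the tensor product coalgebra structure; Sweedler notation $\Delta(b)=b_{(1)}\otimes b_{(2)}$. For linear maps $\mathfrak p,\mathfrak d\colon C\otimes C\to C$ write $a\cdot b=\mathfrak p(a\otimes b)$, $a:b=\mathfrak d(a\otimes b)$, $\mathfrak p(x_i\otimes x_j)=\sum_{k=0}^{n-1}\mathfrak p_{ij}^kx_k$, $\mathfrak d(x_i\otimes x_j)=\sum_{k=0}^{n-1}\mathfrak d_{ij}^kx_k$. A triple $(C,\mathfrak p,\mathfrak d)$ with $\mathfrak p,\mathfrak d$ coalgebra morphisms is a regular $q$-magma coalgebra if there are coalgebra morphisms $a\otimes b\mapsto a^b$, $a\otimes b\mapsto a_b$ from $C\otimes C$ to $C$ with $a^{b_{(1)}}\cdot b_{(2)}=(a\cdot b_{(1)})^{b_{(2)}}=\epsilon(b)a$ and $(a:b_{(2)})_{b_{(1)}}=a_{b_{(2)}}:b_{(1)}=\epsilon(b)a$.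 It is a regular $q$-cycle coalgebra if moreover for all $a,b,c$: (1) $(a\cdot b_{(1)})\cdot(c:b_{(2)})=(a\cdot c_{(2)})\cdot(b\cdot c_{(1)})$; (2) $(a\cdot b_{(1)}):(c\cdot b_{(2)})=(a:c_{(2)})\cdot(b:c_{(1)})$; (3) $(a:b_{(1)}):(c:b_{(2)})=(a:c_{(2)}):(b\cdot c_{(1)})$. *)

theory Defs
  imports "HOL-Computational_Algebra.Polynomial"
begin

text \<open>Coordinates: C has basis x_0..x_{n-1}.  A linear map f : C \<otimes> C \<rightarrow> C is given by
  its structure constants f i j k = f_{ij}^k, i.e. f(x_i \<otimes> x_j) = \<Sum>_{k<n} f_{ij}^k x_k.
  All conditions are linear (resp. multilinear) in their arguments, so they are stated on
  basis elements.  Delta(x_i) = \<Sum>_{s+t=i} x_s \<otimes> x_t, eps(x_i) = delta_{i0}.\<close>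

definition alg_closed_type :: "'a::field itself \<Rightarrow> bool" where
  "alg_closed_type _ \<longleftrightarrow> (\<forall>q :: 'a poly. degree q > 0 \<longrightarrow> (\<exists>x. poly q x = 0))"

definition kdelta :: "nat \<Rightarrow> nat \<Rightarrow> 'a::field" where
  "kdelta i j = (if i = j then 1 else 0)"

text \<open>f : C \<otimes> C \<rightarrow> C is a coalgebra morphism (C \<otimes> C with tensor product coalgebra
  structure): Delta(f(x_i \<otimes> x_j)) = (f \<otimes> f)(Delta(x_i \<otimes> x_j)) and eps(f(x_i \<otimes> x_j)) = eps(x_i)eps(x_j),
  compared coefficientwise at x_u \<otimes> x_v.\<close>
definition coalg_morph2 :: "nat \<Rightarrow> (nat \<Rightarrow> nat \<Rightarrow> nat \<Rightarrow> 'a::field) \<Rightarrow> bool" where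
  "coalg_morph2 n f \<longleftrightarrow>
     (\<forall>i<n. \<forall>j<n. \<forall>u<n. \<forall>v<n.
        (if u + v < n then f i j (u + v) else 0) =
        (\<Sum>a\<le>i. \<Sum>c\<le>j. f a c u * f (i - a) (j - c) v)) \<and>
     (\<forall>i<n. \<forall>j<n. f i j 0 = kdelta i 0 * kdelta j 0)"

text \<open>Regular q-magma coalgebra.  L i j k = coefficients of x_i^{x_j},
  R i j k = coefficients of (x_i)_{x_j}.\<close>
definition regular_q_magma_coalg ::
  "nat \<Rightarrow> (nat \<Rightarrow> nat \<Rightarrow> nat \<Rightarrow> 'a::field) \<Rightarrow> (nat \<Rightarrow> nat \<Rightarrow> nat \<Rightarrow> 'a) \<Rightarrow> bool" where
  "regular_q_magma_coalg n p d \<longleftrightarrow>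
     coalg_morph2 n p \<and> coalg_morph2 n d \<and>
     (\<exists>L R. coalg_morph2 n L \<and> coalg_morph2 n R \<and>
       (\<forall>i<n. \<forall>j<n. \<forall>k<n.
          \<comment> \<open>a^{b_(1)} . b_(2) = eps(b) a\<close>
          (\<Sum>s\<le>j. \<Sum>m<n. L i s m * p m (j - s) k) = kdelta j 0 * kdelta i k \<and>
          \<comment> \<open>(a . b_(1))^{b_(2)} = eps(b) a\<close>
          (\<Sum>s\<le>j. \<Sum>m<n. p i s m * L m (j - s) k) = kdelta j 0 * kdelta i k \<and>
          \<comment> \<open>(a : b_(2))_{b_(1)} = eps(b) a\<close>
          (\<Sum>s\<le>j. \<Sum>m<n. d i (j - s) m * R m s k) = kdelta j 0 * kdelta i k \<and>
          \<comment> \<open>a_{b_(2)} : b_(1) = eps(b) a\<close>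
          (\<Sum>s\<le>j. \<Sum>m<n. R i (j - s) m * d m s k) = kdelta j 0 * kdelta i k))"

definition regular_q_cycle_coalg ::
  "nat \<Rightarrow> (nat \<Rightarrow> nat \<Rightarrow> nat \<Rightarrow> 'a::field) \<Rightarrow> (nat \<Rightarrow> nat \<Rightarrow> nat \<Rightarrow> 'a) \<Rightarrow> bool" where
  "regular_q_cycle_coalg n p d \<longleftrightarrow>
     regular_q_magma_coalg n p d \<and>
     (\<forall>i<n. \<forall>j<n. \<forall>l<n. \<forall>k<n.
        \<comment> \<open>(1) (a . b_(1)) . (c : b_(2)) = (a . c_(2)) . (b . c_(1))\<close>
        (\<Sum>s\<le>j. \<Sum>m<n. \<Sum>m'<n. p i s m * d l (j - s) m' * p m m' k) =
        (\<Sum>s\<le>l. \<Sum>m<n. \<Sum>m'<n. p i (l - s) m * p j s m' * p m m' k) \<and>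
        \<comment> \<open>(2) (a . b_(1)) : (c . b_(2)) = (a : c_(2)) . (b : c_(1))\<close>
        (\<Sum>s\<le>j. \<Sum>m<n. \<Sum>m'<n. p i s m * p l (j - s) m' * d m m' k) =
        (\<Sum>s\<le>l. \<Sum>m<n. \<Sum>m'<n. d i (l - s) m * d j s m' * p m m' k) \<and>
        \<comment> \<open>(3) (a : b_(1)) : (c : b_(2)) = (a : c_(2)) : (b . c_(1))\<close>
        (\<Sum>s\<le>j. \<Sum>m<n. \<Sum>m'<n. d i s m * d l (j - s) m' * d m m' k) =
        (\<Sum>s\<le>l. \<Sum>m<n. \<Sum>m'<n. d i (l - s) m * p j s m' * d m m' k))"

end

theory Submission
  imports Defs
begin

lemma dsum_single:
  fixes g :: "nat \<Rightarrow> nat \<Rightarrow> 'b::comm_monoid_add"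
  assumes "ax \<le> A" "cx \<le> C"
    and "\<And>a c. a \<le> A \<Longrightarrow> c \<le> C \<Longrightarrow> g a c = (if a = ax \<and> c = cx then v else 0)"
  shows "(\<Sum>a\<le>A. \<Sum>c\<le>C. g a c) = v"
proof -
  have "(\<Sum>a\<le>A. \<Sum>c\<le>C. g a c) = (\<Sum>a\<le>A. \<Sum>c\<le>C. (if a = ax then (if c = cx then v else 0) else 0))"
    by (intro sum.cong refl) (simp add: assms(3))
  also have "\<dots> = (\<Sum>a\<le>A. (if a = ax then v else 0))"
    by (intro sum.cong refl) (use assms(2) in simp)
  also have "\<dots> = v" using assms(1) by simp
  finally show ?thesis .
qed

lemma dsum_two:
  fixes g :: "nat \<Rightarrow> nat \<Rightarrow> 'b::comm_monoid_add"
  assumes "ax \<le> A" "cx \<le> C" "ay \<le> A" "cy \<le> C"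
    and "\<And>a c. a \<le> A \<Longrightarrow> c \<le> C \<Longrightarrow> g a c = (if a = ax \<and> c = cx then v else 0) + (if a = ay \<and> c = cy then w else 0)"
  shows "(\<Sum>a\<le>A. \<Sum>c\<le>C. g a c) = v + w"
proof -
  have "(\<Sum>a\<le>A. \<Sum>c\<le>C. g a c) = (\<Sum>a\<le>A. \<Sum>c\<le>C. (if a = ax \<and> c = cx then v else 0) + (if a = ay \<and> c = cy then w else 0))"
    by (intro sum.cong refl) (simp add: assms(5))
  also have "\<dots> = (\<Sum>a\<le>A. \<Sum>c\<le>C. (if a = ax \<and> c = cx then v else 0)) + (\<Sum>a\<le>A. \<Sum>c\<le>C. (if a = ay \<and> c = cy then w else 0))"
    by (simp add: sum.distrib)
  also have "\<dots> = v + w"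
    using dsum_single[OF assms(1,2), of "\<lambda>a c. (if a = ax \<and> c = cx then v else 0)" v]
      dsum_single[OF assms(3,4), of "\<lambda>a c. (if a = ay \<and> c = cy then w else 0)" w] by simp
  finally show ?thesis .
qed

lemma sum_pts2:
  fixes g :: "'c \<Rightarrow> 'b::comm_monoid_add"
  assumes "finite A" "xa \<in> A" "xb \<in> A"
    and "\<And>x. x \<in> A \<Longrightarrow> g x = (if x = xa then v else 0) + (if x = xb then w else 0)"
  shows "sum g A = v + w"
proof -
  have "sum g A = (\<Sum>x\<in>A. (if x = xa then v else 0)) + (\<Sum>x\<in>A. (if x = xb then w else 0))"
    by (simp add: assms(4) sum.distrib cong: sum.cong)
  also have "\<dots> = v + w" using assms(1-3) by (simp add: sum.delta')
  finally show ?thesis .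
qed

lemma sum_pts3:
  fixes g :: "'c \<Rightarrow> 'b::comm_monoid_add"
  assumes "finite A" "xa \<in> A" "xb \<in> A" "xc \<in> A"
    and "\<And>x. x \<in> A \<Longrightarrow> g x = (if x = xa then v else 0) + (if x = xb then w else 0) + (if x = xc then u else 0)"
  shows "sum g A = v + w + u"
proof -
  have "sum g A = (\<Sum>x\<in>A. (if x = xa then v else 0)) + (\<Sum>x\<in>A. (if x = xb then w else 0)) + (\<Sum>x\<in>A. (if x = xc then u else 0))"
    by (simp add: assms(5) sum.distrib cong: sum.cong)
  also have "\<dots> = v + w + u" using assms(1-4) by (simp add: sum.delta')
  finally show ?thesis .
qed

lemma sum3_cart:
  "(\<Sum>a\<in>A. \<Sum>b\<in>B. \<Sum>c\<in>C. g a b c) = (\<Sum>x\<in>A \<times> B \<times> C. g (fst x) (fst (snd x)) (snd (snd x)))"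
  by (simp add: sum.cartesian_product case_prod_beta)

lemma sum2_cart:
  "(\<Sum>b\<in>B. \<Sum>c\<in>C. g b c) = (\<Sum>x\<in>B \<times> C. g (fst x) (snd x))"
  by (simp add: sum.cartesian_product case_prod_beta)

locale cyc =
  fixes p :: "nat \<Rightarrow> nat \<Rightarrow> nat \<Rightarrow> 'a::field_char_0" and n :: nat
  assumes cm: "coalg_morph2 n p" and n2: "2 \<le> n"
begin

lemma rec1:
  assumes "i < n" "j < n" "Suc m < n"
  shows "p i j (Suc m) = (\<Sum>a\<le>i. \<Sum>c\<le>j. p a c 1 * p (i-a) (j-c) m)"
proof -
  have "1 < n" "m < n" using assms n2 by auto
  then have "(if 1 + m < n then p i j (1 + m) else 0) = (\<Sum>a\<le>i. \<Sum>c\<le>j. p a c 1 * p (i-a) (j-c) m)"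
    using cm assms(1,2) unfolding coalg_morph2_def by blast
  then show ?thesis using assms(3) by simp
qed

lemma nil1:
  assumes "i < n" "j < n"
  shows "(\<Sum>a\<le>i. \<Sum>c\<le>j. p a c 1 * p (i-a) (j-c) (n-1)) = 0"
proof -
  have "1 < n" "n - 1 < n" using n2 by auto
  then have "(if 1 + (n-1) < n then p i j (1 + (n-1)) else 0) = (\<Sum>a\<le>i. \<Sum>c\<le>j. p a c 1 * p (i-a) (j-c) (n-1))"
    using cm assms(1,2) unfolding coalg_morph2_def by blast
  then show ?thesis using n2 by simp
qed

lemma counit:
  assumes "i < n" "j < n"
  shows "p i j 0 = (if i = 0 \<and> j = 0 then 1 else 0)"
  using cm assms unfolding coalg_morph2_def kdelta_def by auto

lemma p000pow: "m < n \<Longrightarrow> p 0 0 m = p 0 0 1 ^ m"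
proof (induction m)
  case 0 then show ?case using counit n2 by simp
next
  case (Suc m)
  have "p 0 0 (Suc m) = p 0 0 1 * p 0 0 m" using rec1[of 0 0 m] Suc.prems n2 by simp
  then show ?case using Suc by simp
qed

lemma p001: "p 0 0 1 = 0"
proof -
  have "p 0 0 1 * p 0 0 (n-1) = 0" using nil1[of 0 0] n2 by simp
  then have "p 0 0 1 ^ n = 0" using p000pow[of "n-1"] n2
    by (metis One_nat_def Suc_diff_1 diff_less less_le_trans pos2 power_Suc zero_less_one)
  then show ?thesis by simp
qed

lemma F0:
  assumes p101: "p 1 0 1 = 1"
  shows "m < n \<Longrightarrow> (\<forall>i<n. i < m \<longrightarrow> p i 0 m = 0) \<and> p m 0 m = 1"
proof (induction m)
  case 0 then show ?case using counit n2 by simp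
next
  case (Suc m)
  have IH: "\<forall>i<n. i < m \<longrightarrow> p i 0 m = 0" "p m 0 m = 1" using Suc by auto
  have A: "p i 0 (Suc m) = 0" if "i < n" "i < Suc m" for i
  proof -
    have "p i 0 (Suc m) = (\<Sum>a\<le>i. \<Sum>c\<le>0. p a c 1 * p (i-a) (0-c) m)"
      using rec1[of i 0 m] that Suc.prems n2 by simp
    also have "\<dots> = 0"
    proof (rule sum.neutral, rule ballI)
      fix a assume "a \<in> {..i}"
      then have "a \<le> i" by simp
      show "(\<Sum>c\<le>0. p a c 1 * p (i-a) (0-c) m) = 0"
      proof (cases "a = 0")
        case True then show ?thesis using p001 by simp
      next
        case False
        then have "i - a < m" "i - a < n" using that \<open>a \<le> i\<close> by auto
        then show ?thesis using IH by simp
      qed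
    qed
    finally show ?thesis .
  qed
  have B: "p (Suc m) 0 (Suc m) = 1"
  proof -
    have "p (Suc m) 0 (Suc m) = (\<Sum>a\<le>Suc m. \<Sum>c\<le>0. p a c 1 * p (Suc m - a) (0 - c) m)"
      using rec1[of "Suc m" 0 m] Suc.prems n2 by simp
    also have "\<dots> = 1"
    proof (rule dsum_single[where ax=1 and cx=0])
      fix a c assume "a \<le> Suc m" "c \<le> (0::nat)"
      then have cx: "c = 0" by simp
      show "p a c 1 * p (Suc m - a) (0 - c) m = (if a = 1 \<and> c = 0 then 1 else 0)"
      proof (cases "a = 0")
        case True then show ?thesis using p001 cx by simp
      next
        case False
        show ?thesis
        proof (cases "a = 1")
          case True then show ?thesis using p101 cx IH(2) by simp
        next
          case False
          then have "Suc m - a < m" "Suc m - a < n" using \<open>a \<noteq> 0\<close> \<open>a \<le> Suc m\<close> Suc.prems by auto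
          then show ?thesis using IH(1) cx False by simp
        qed
      qed
    qed auto
    finally show ?thesis .
  qed
  show ?case using A B by auto
qed

end

locale cyc1 = cyc +
  assumes p101: "p 1 0 1 = 1"
begin

lemma F0a: "m < n \<Longrightarrow> i < n \<Longrightarrow> i < m \<Longrightarrow> p i 0 m = 0"
  using F0[OF p101] by blast

lemma F0b: "m < n \<Longrightarrow> p m 0 m = 1"
  using F0[OF p101] by blast

lemma W:
  assumes t1: "1 \<le> t" and tn: "t < n" and ht: "\<forall>y<t. p 0 y 1 = 0"
  shows "m < n \<Longrightarrow> (\<forall>i y. i < n \<longrightarrow> y < t \<longrightarrow> i < m \<longrightarrow> p i y m = 0)
     \<and> (\<forall>i. i < n \<longrightarrow> i + 1 < m \<longrightarrow> p i t m = 0)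
     \<and> p (m - 1) t m = of_nat m * p 0 t 1"
proof (induction m)
  case 0
  then show ?case using counit t1 tn by auto
next
  case (Suc m)
  have mn: "m < n" "Suc m < n" using Suc.prems by auto
  have W1: "\<And>i y. i < n \<Longrightarrow> y < t \<Longrightarrow> i < m \<Longrightarrow> p i y m = 0"
    and W2: "\<And>i. i < n \<Longrightarrow> i + 1 < m \<Longrightarrow> p i t m = 0"
    and W3: "p (m - 1) t m = of_nat m * p 0 t 1"
    using Suc.IH mn by auto
  have A: "p i y (Suc m) = 0" if "i < n" "y < t" "i < Suc m" for i y
  proof -
    have yn: "y < n" using that tn by auto
    have "p i y (Suc m) = (\<Sum>a\<le>i. \<Sum>c\<le>y. p a c 1 * p (i-a) (y-c) m)"
      using rec1[OF that(1) yn mn(2)] .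
    also have "\<dots> = 0"
    proof (rule sum.neutral, rule ballI, rule sum.neutral, rule ballI)
      fix a c assume "a \<in> {..i}" "c \<in> {..y}"
      then have "a \<le> i" "c \<le> y" by auto
      show "p a c 1 * p (i-a) (y-c) m = 0"
      proof (cases "a = 0")
        case True then show ?thesis using ht \<open>c \<le> y\<close> that by simp
      next
        case False
        then have "i - a < m" "i - a < n" "y - c < t" using that \<open>a \<le> i\<close> by auto
        then show ?thesis using W1 by simp
      qed
    qed
    finally show ?thesis .
  qed
  have B: "p i t (Suc m) = 0" if "i < n" "i + 1 < Suc m" for i
  proof -
    have "p i t (Suc m) = (\<Sum>a\<le>i. \<Sum>c\<le>t. p a c 1 * p (i-a) (t-c) m)"
      using rec1[OF that(1) tn mn(2)] .
    also have "\<dots> = 0"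
    proof (rule sum.neutral, rule ballI, rule sum.neutral, rule ballI)
      fix a c assume "a \<in> {..i}" "c \<in> {..t}"
      then have ai: "a \<le> i" and ct: "c \<le> t" by auto
      show "p a c 1 * p (i-a) (t-c) m = 0"
      proof (cases "a = 0")
        case True
        show ?thesis
        proof (cases "c = t")
          case True
          then show ?thesis using \<open>a = 0\<close> F0a[OF mn(1) that(1)] that by simp
        next
          case False
          then show ?thesis using \<open>a = 0\<close> ht ct by simp
        qed
      next
        case False
        show ?thesis
        proof (cases "c = 0")
          case True
          have "i - a + 1 < m" "i - a < n" using False ai that by auto
          then show ?thesis using W2 True by simp
        next
          case False
          have "i - a < m" "i - a < n" "t - c < t" using False \<open>a \<noteq> 0\<close> ai that ct by auto
          then show ?thesis using W1 by simp
        qed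
      qed
    qed
    finally show ?thesis .
  qed
  have C: "p (Suc m - 1) t (Suc m) = of_nat (Suc m) * p 0 t 1"
  proof (cases "m = 0")
    case True
    have "p 0 t (Suc 0) = (\<Sum>a\<le>0. \<Sum>c\<le>t. p a c 1 * p (0-a) (t-c) 0)"
      using rec1[of 0 t 0] tn n2 by simp
    also have "\<dots> = p 0 t 1"
    proof (rule dsum_single[where ax=0 and cx=t])
      fix a c assume "a \<le> (0::nat)" "c \<le> t"
      then show "p a c 1 * p (0 - a) (t - c) 0 = (if a = 0 \<and> c = t then p 0 t 1 else 0)"
        using counit[of 0 "t - c"] tn n2 by auto
    qed auto
    finally show ?thesis using True by simp
  next
    case False
    have "p m t (Suc m) = (\<Sum>a\<le>m. \<Sum>c\<le>t. p a c 1 * p (m-a) (t-c) m)"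
      using rec1[OF mn(1) tn mn(2)] .
    also have "\<dots> = p 0 t 1 + of_nat m * p 0 t 1"
    proof (rule dsum_two[where ax=0 and cx=t and ay=1 and cy=0])
      fix a c assume am: "a \<le> m" and ct: "c \<le> t"
      show "p a c 1 * p (m-a) (t-c) m = (if a = 0 \<and> c = t then p 0 t 1 else 0) + (if a = 1 \<and> c = 0 then of_nat m * p 0 t 1 else 0)"
      proof (cases "a = 0")
        case True
        then show ?thesis using F0b[OF mn(1)] ht ct t1 by (cases "c = t") auto
      next
        case a0: False
        show ?thesis
        proof (cases "c = 0")
          case True
          show ?thesis
          proof (cases "a = 1")
            case True
            then show ?thesis using W3 p101 \<open>c = 0\<close> by simp
          next
            case False
            have "m - a + 1 < m" "m - a < n" using False a0 am mn by auto
            then show ?thesis using W2 \<open>c = 0\<close> False a0 by simp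
          qed
        next
          case False
          have "m - a < m" "m - a < n" "t - c < t" using False a0 am ct mn by auto
          then show ?thesis using W1 False a0 by simp
        qed
      qed
    qed (use False in auto)
    also have "\<dots> = of_nat (Suc m) * p 0 t 1" by (simp add: algebra_simps)
    finally show ?thesis by simp
  qed
  show ?case using A B C by auto
qed

lemma hzero: "y < n \<Longrightarrow> p 0 y 1 = 0"
proof (rule ccontr)
  assume "y < n" "p 0 y 1 \<noteq> 0"
  define t where "t = (LEAST t. t < n \<and> p 0 t 1 \<noteq> 0)"
  have tP: "t < n \<and> p 0 t 1 \<noteq> 0" unfolding t_def
    by (rule LeastI[of _ y]) (use \<open>y < n\<close> \<open>p 0 y 1 \<noteq> 0\<close> in auto)
  have ht: "\<forall>y<t. p 0 y 1 = 0"
  proof (intro allI impI)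
    fix y assume "y < t"
    then have "\<not> (y < n \<and> p 0 y 1 \<noteq> 0)" unfolding t_def using not_less_Least by blast
    then show "p 0 y 1 = 0" using \<open>y < t\<close> tP by auto
  qed
  have t1: "1 \<le> t" using tP p001 by (cases t) auto
  have tn: "t < n" using tP by auto
  have Wn: "(\<forall>i y. i < n \<longrightarrow> y < t \<longrightarrow> i < n - 1 \<longrightarrow> p i y (n-1) = 0)
     \<and> (\<forall>i. i < n \<longrightarrow> i + 1 < n - 1 \<longrightarrow> p i t (n-1) = 0)
     \<and> p (n - 1 - 1) t (n-1) = of_nat (n-1) * p 0 t 1"
    using W[OF t1 tn ht, of "n-1"] n2 by auto
  have "0 = (\<Sum>a\<le>n-1. \<Sum>c\<le>t. p a c 1 * p (n-1-a) (t-c) (n-1))"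
    using nil1[of "n-1" t] tn n2 by simp
  also have "\<dots> = p 0 t 1 + of_nat (n-1) * p 0 t 1"
  proof (rule dsum_two[where ax=0 and cx=t and ay=1 and cy=0])
    fix a c assume am: "a \<le> n-1" and ct: "c \<le> t"
    show "p a c 1 * p (n-1-a) (t-c) (n-1) = (if a = 0 \<and> c = t then p 0 t 1 else 0) + (if a = 1 \<and> c = 0 then of_nat (n-1) * p 0 t 1 else 0)"
    proof (cases "a = 0")
      case True
      then show ?thesis using F0b[of "n-1"] n2 ht ct t1 by (cases "c = t") auto
    next
      case a0: False
      show ?thesis
      proof (cases "c = 0")
        case True
        show ?thesis
        proof (cases "a = 1")
          case True
          then show ?thesis using Wn p101 \<open>c = 0\<close> by simp
        next
          case False
          have "n - 1 - a + 1 < n - 1" "n - 1 - a < n" using False a0 am n2 by auto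
          then show ?thesis using Wn \<open>c = 0\<close> False a0 by simp
        qed
      next
        case False
        have "n - 1 - a < n - 1" "n - 1 - a < n" "t - c < t" using False a0 am ct n2 by auto
        then show ?thesis using Wn False a0 by simp
      qed
    qed
  qed (use n2 in auto)
  also have "\<dots> = of_nat n * p 0 t 1" using n2 by (simp add: algebra_simps of_nat_diff)
  finally have "of_nat n * p 0 t 1 = 0" by simp
  then show False using tP n2 by simp
qed

lemma Z0:
  assumes "m < n" "1 \<le> m" "t < n"
  shows "p 0 t m = 0"
proof -
  obtain k where Suc: "m = Suc k" using assms(2) by (cases m) auto
  have "p 0 t (Suc k) = (\<Sum>a\<le>0. \<Sum>c\<le>t. p a c 1 * p (0-a) (t-c) k)"
    using rec1[of 0 t k] assms Suc by simp
  also have "\<dots> = 0" using hzero assms by simp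
  finally show ?thesis using Suc by simp
qed

lemma V:
  assumes D2: "2 \<le> D"
    and H: "\<And>x y. 1 \<le> x \<Longrightarrow> 1 \<le> y \<Longrightarrow> x + y < D \<Longrightarrow> x < n \<Longrightarrow> y < n \<Longrightarrow> p x y 1 = 0"
  shows "m < n \<Longrightarrow> (\<forall>i t. i < n \<longrightarrow> t < n \<longrightarrow> 1 \<le> t \<longrightarrow>
      (i + t < D + m - 1 \<longrightarrow> p i t m = 0) \<and>
      (i + t = D + m - 1 \<longrightarrow> p i t m = of_nat m * p (i + 1 - m) t 1))"
proof (induction m)
  case 0
  then show ?case using counit by auto
next
  case (Suc m)
  have mn: "m < n" "Suc m < n" using Suc.prems by auto
  have IH1: "\<And>i t. i < n \<Longrightarrow> t < n \<Longrightarrow> 1 \<le> t \<Longrightarrow> i + t < D + m - 1 \<Longrightarrow> p i t m = 0"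
    and IH2: "\<And>i t. i < n \<Longrightarrow> t < n \<Longrightarrow> 1 \<le> t \<Longrightarrow> i + t = D + m - 1 \<Longrightarrow> p i t m = of_nat m * p (i + 1 - m) t 1"
    using Suc.IH mn by auto
  have tm: "p a c 1 * p (i-a) (t-c) m =
      (if a = 1 \<and> c = 0 \<and> i + t = D + m then of_nat m * p (i - m) t 1 else 0) +
      (if a = i - m \<and> c = t \<and> i + t = D + m then p (i - m) t 1 else 0)"
    if it: "i < n" "t < n" "1 \<le> t" "i + t \<le> D + m" and ac: "a \<le> i" "c \<le> t" for i t a c
  proof (cases "a = 0")
    case True
    then show ?thesis using hzero[of c] hzero[of t] ac it by auto
  next
    case a0: False
    show ?thesis
    proof (cases "c = 0")
      case True
      show ?thesis
      proof (cases "a = 1 \<and> i + t = D + m")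
        case True
        then have "p (i - 1) t m = of_nat m * p (i - 1 + 1 - m) t 1"
          using IH2[of "i - 1" t] it ac by auto
        moreover have "i - 1 + 1 - m = i - m" using True ac by auto
        ultimately show ?thesis using True \<open>c = 0\<close> p101 it by simp
      next
        case False
        then have "i - a + t < D + m - 1" using a0 ac it by auto
        then have "p (i - a) t m = 0" using IH1[of "i - a" t] it by auto
        then show ?thesis using False \<open>c = 0\<close> it by auto
      qed
    next
      case c0: False
      show ?thesis
      proof (cases "a + c < D")
        case True
        then have "p a c 1 = 0" using H[of a c] a0 c0 ac it by auto
        moreover have "\<not> (a = i - m \<and> c = t \<and> i + t = D + m)"
        proof
          assume "a = i - m \<and> c = t \<and> i + t = D + m"
          then show False using True by linarith
        qed
        ultimately show ?thesis using c0 by auto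
      next
        case False
        show ?thesis
        proof (cases "c = t")
          case True
          show ?thesis
          proof (cases "i - a < m")
            case True
            then have "p (i - a) 0 m = 0" using F0a[of m "i - a"] mn it by auto
            moreover have "a \<noteq> i - m" using True ac a0 by auto
            ultimately show ?thesis using \<open>c = t\<close> c0 by auto
          next
            case False
            then have "i - a = m" "a = i - m" "i + t = D + m" using \<open>\<not> a + c < D\<close> \<open>c = t\<close> it ac by auto
            then show ?thesis using F0b[OF mn(1)] \<open>c = t\<close> c0 by simp
          qed
        next
          case False
          have "i - a + (t - c) < D + m - 1" using \<open>\<not> a + c < D\<close> False it ac D2 by auto
          then have "p (i - a) (t - c) m = 0" using IH1[of "i - a" "t - c"] it ac False by auto
          then show ?thesis using False c0 by auto
        qed
      qed
    qed
  qed
  show ?case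
  proof (intro allI impI conjI)
    fix i t assume it: "i < n" "t < n" "1 \<le> t"
    have rs: "p i t (Suc m) = (\<Sum>a\<le>i. \<Sum>c\<le>t. p a c 1 * p (i-a) (t-c) m)"
      using rec1[OF it(1) it(2) mn(2)] .
    {
      assume lt: "i + t < D + Suc m - 1"
      have "(\<Sum>a\<le>i. \<Sum>c\<le>t. p a c 1 * p (i-a) (t-c) m) = 0"
        by (rule sum.neutral, rule ballI, rule sum.neutral, rule ballI)
           (use tm[OF it] lt in auto)
      then show "p i t (Suc m) = 0" using rs by simp
    }
    {
      assume eq: "i + t = D + Suc m - 1"
      show "p i t (Suc m) = of_nat (Suc m) * p (i + 1 - Suc m) t 1"
      proof (cases "i = 0")
        case True
        then show ?thesis using Z0[of "Suc m" t] mn it hzero by simp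
      next
        case False
        have "(\<Sum>a\<le>i. \<Sum>c\<le>t. p a c 1 * p (i-a) (t-c) m) = of_nat m * p (i - m) t 1 + p (i - m) t 1"
        proof (rule dsum_two[where ax=1 and cx=0 and ay="i-m" and cy=t])
          fix a c assume "a \<le> i" "c \<le> t"
          then show "p a c 1 * p (i-a) (t-c) m = (if a = 1 \<and> c = 0 then of_nat m * p (i - m) t 1 else 0) + (if a = i - m \<and> c = t then p (i - m) t 1 else 0)"
            using tm[OF it, of a c] eq D2 by auto
        qed (use False in auto)
        then show ?thesis using rs by (simp add: algebra_simps)
      qed
    }
  qed
qed

lemma Fpow:
  assumes r2: "2 \<le> r" and fz: "\<And>k. 1 < k \<Longrightarrow> k < r \<Longrightarrow> k < n \<Longrightarrow> p k 0 1 = 0"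
  shows "m < n \<Longrightarrow> (\<forall>i<n. (i < m + r - 1 \<longrightarrow> p i 0 m = (if i = m then 1 else 0)) \<and>
      (i = m + r - 1 \<longrightarrow> p i 0 m = of_nat m * p r 0 1))"
proof (induction m)
  case 0
  then show ?case using counit r2 by auto
next
  case (Suc m)
  have mn: "m < n" "Suc m < n" using Suc.prems by auto
  have IH1: "\<And>i. i < n \<Longrightarrow> i < m + r - 1 \<Longrightarrow> p i 0 m = (if i = m then 1 else 0)"
    and IH2: "\<And>i. i < n \<Longrightarrow> i = m + r - 1 \<Longrightarrow> p i 0 m = of_nat m * p r 0 1"
    using Suc.IH mn by auto
  have tm: "p a c 1 * p (i-a) (0-c) m =
      (if a = 1 then p (i - 1) 0 m else 0) + (if a = r \<and> i = m + r then p r 0 1 else 0)"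
    if it: "i < n" "i \<le> m + r" and ac: "a \<le> i" "c \<le> 0" for i a c
  proof -
    have c0: "c = 0" using ac by simp
    show ?thesis
    proof (cases "a = 0")
      case True then show ?thesis using p001 c0 r2 by auto
    next
      case a0: False
      show ?thesis
      proof (cases "a = 1")
        case True then show ?thesis using p101 c0 r2 by auto
      next
        case a1: False
        show ?thesis
        proof (cases "a < r")
          case True then show ?thesis using fz[of a] a0 a1 c0 it ac by auto
        next
          case False
          show ?thesis
          proof (cases "a = r \<and> i = m + r")
            case True then show ?thesis using F0b[OF mn(1)] c0 a1 by auto
          next
            case False
            have "i - a < m" using False \<open>\<not> a < r\<close> it ac by auto
            then have "p (i - a) 0 m = 0" using F0a[OF mn(1)] it by auto
            then show ?thesis using False c0 a1 by auto
          qed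
        qed
      qed
    qed
  qed
  show ?case
  proof (intro allI impI conjI)
    fix i assume "i < n"
    have rs: "p i 0 (Suc m) = (\<Sum>a\<le>i. \<Sum>c\<le>0. p a c 1 * p (i-a) (0-c) m)"
      using rec1[OF \<open>i < n\<close> _ mn(2)] n2 by simp
    {
      assume lt: "i < Suc m + r - 1"
      show "p i 0 (Suc m) = (if i = Suc m then 1 else 0)"
      proof (cases "i = 0")
        case True
        then show ?thesis using rs p001 counit by simp
      next
        case False
        have "(\<Sum>a\<le>i. \<Sum>c\<le>0. p a c 1 * p (i-a) (0-c) m) = p (i - 1) 0 m"
        proof (rule dsum_single[where ax=1 and cx=0])
          fix a c assume "a \<le> i" "c \<le> (0::nat)"
          then show "p a c 1 * p (i-a) (0-c) m = (if a = 1 \<and> c = 0 then p (i - 1) 0 m else 0)"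
            using tm[OF \<open>i < n\<close> _ \<open>a \<le> i\<close> \<open>c \<le> 0\<close>] lt by auto
        qed (use False in auto)
        also have "\<dots> = (if i = Suc m then 1 else 0)" using IH1[of "i - 1"] lt \<open>i < n\<close> False by auto
        finally show ?thesis using rs by simp
      qed
    }
    {
      assume eq: "i = Suc m + r - 1"
      have "(\<Sum>a\<le>i. \<Sum>c\<le>0. p a c 1 * p (i-a) (0-c) m) = p (i - 1) 0 m + p r 0 1"
      proof (rule dsum_two[where ax=1 and cx=0 and ay=r and cy=0])
        fix a c assume "a \<le> i" "c \<le> (0::nat)"
        then show "p a c 1 * p (i-a) (0-c) m = (if a = 1 \<and> c = 0 then p (i - 1) 0 m else 0) + (if a = r \<and> c = 0 then p r 0 1 else 0)"
          using tm[OF \<open>i < n\<close> _ \<open>a \<le> i\<close> \<open>c \<le> 0\<close>] eq r2 by auto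
      qed (use eq r2 in auto)
      also have "\<dots> = of_nat (Suc m) * p r 0 1" using IH2[of "i - 1"] eq \<open>i < n\<close> r2 by (simp add: algebra_simps)
      finally show "p i 0 (Suc m) = of_nat (Suc m) * p r 0 1" using rs by simp
    }
  qed
qed

lemma Fid:
  assumes fz: "\<And>k. 1 < k \<Longrightarrow> k < n \<Longrightarrow> p k 0 1 = 0" and "i < n" "m < n"
  shows "p i 0 m = (if i = m then 1 else 0)"
proof -
  have F: "\<forall>i<n. (i < m + n - 1 \<longrightarrow> p i 0 m = (if i = m then 1 else 0)) \<and>
      (i = m + n - 1 \<longrightarrow> p i 0 m = of_nat m * p n 0 1)"
    using Fpow[of n m] fz n2 assms(3) by auto
  show ?thesis
  proof (cases "i < m + n - 1")
    case True then show ?thesis using F assms by auto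
  next
    case False
    then have e: "i = m + n - 1" "m = 0" using assms by auto
    have "p i 0 m = of_nat m * p n 0 1" using F assms(2) e(1) by blast
    then show ?thesis using e n2 by auto
  qed
qed

end

locale cyc2 = cyc1 +
  assumes cy: "regular_q_cycle_coalg n p p"
begin

lemma cyc_eq:
  assumes "i < n" "j < n" "l < n"
  shows "(\<Sum>s\<le>j. \<Sum>m<n. \<Sum>m'<n. p i s m * p l (j - s) m' * p m m' 1) =
         (\<Sum>s\<le>l. \<Sum>m<n. \<Sum>m'<n. p i (l - s) m * p j s m' * p m m' 1)"
proof -
  have "1 < n" using n2 by simp
  then show ?thesis using cy assms unfolding regular_q_cycle_coalg_def by blast
qed

lemma Qeq:
  assumes D2: "2 \<le> D"
    and H: "\<And>x y. 1 \<le> x \<Longrightarrow> 1 \<le> y \<Longrightarrow> x + y < D \<Longrightarrow> x < n \<Longrightarrow> y < n \<Longrightarrow> p x y 1 = 0"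
    and k1: "1 \<le> k" and j1: "1 \<le> j" and kj: "k + j = D" and Dn: "D - 1 < n"
  shows "p k j 1 * p 1 (D-1) 1 + of_nat j * p k j 1 * p k j 1 = of_nat D * p 1 (D-1) 1 * p k j 1"
proof -
  have VV: "\<And>m. m < n \<Longrightarrow> (\<forall>i t. i < n \<longrightarrow> t < n \<longrightarrow> 1 \<le> t \<longrightarrow>
      (i + t < D + m - 1 \<longrightarrow> p i t m = 0) \<and>
      (i + t = D + m - 1 \<longrightarrow> p i t m = of_nat m * p (i + 1 - m) t 1))"
    using V[OF D2 H] by blast
  have Vz: "\<And>i t m. i < n \<Longrightarrow> t < n \<Longrightarrow> 1 \<le> t \<Longrightarrow> m < n \<Longrightarrow> i + t < D + m - 1 \<Longrightarrow> p i t m = 0"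
    using VV by blast
  have Vb: "\<And>i t m. i < n \<Longrightarrow> t < n \<Longrightarrow> 1 \<le> t \<Longrightarrow> m < n \<Longrightarrow> i + t = D + m - 1 \<Longrightarrow> p i t m = of_nat m * p (i + 1 - m) t 1"
    using VV by blast
  have kn: "k < n" and jn: "j < n" and D1: "D - 1 \<ge> 1" using kj Dn k1 j1 by auto
  have cz: "\<And>i t. i < n \<Longrightarrow> t < n \<Longrightarrow> (i \<noteq> 0 \<or> t \<noteq> 0) \<Longrightarrow> p i t 0 = 0"
    using counit by auto
  have Hz: "\<And>x y. 1 \<le> x \<Longrightarrow> 1 \<le> y \<Longrightarrow> x + y < D \<Longrightarrow> x < n \<Longrightarrow> y < n \<Longrightarrow> p x y 1 = 0"
    using H by blast
  have pkk: "p k 0 k = 1" using F0b kn by simp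
  have pjj: "p j 0 j = 1" using F0b jn by simp
  have v1: "p (D-1) j j = of_nat j * p k j 1"
  proof -
    have "p (D-1) j j = of_nat j * p (D - 1 + 1 - j) j 1" using Vb[of "D-1" j j] Dn jn j1 kj by auto
    moreover have "D - 1 + 1 - j = k" using kj k1 by auto
    ultimately show ?thesis by simp
  qed
  have v2: "p j (D-1) j = of_nat j * p 1 (D-1) 1"
    using Vb[of j "D-1" j] Dn jn D1 kj by auto
  have v3: "p k (D-1) k = of_nat k * p 1 (D-1) 1"
    using Vb[of k "D-1" k] Dn kn D1 kj by auto
  have v4: "p k j 1 = p k j 1" ..
  have v5: "p (D-1) 0 (D-1) = 1" using F0b Dn by simp
  have L: "(\<Sum>s\<le>j. \<Sum>m<n. \<Sum>m'<n. p k s m * p (D-1) (j - s) m' * p m m' 1)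
      = p k j 1 * p 1 (D-1) 1 + of_nat j * p k j 1 * p k j 1"
    unfolding sum3_cart
  proof (rule sum_pts2[where xa="(j, 1, D-1)" and xb="(0, k, j)"])
    fix x assume xA: "x \<in> {..j} \<times> {..<n} \<times> {..<n}"
    obtain s m m' where xe: "x = (s, m, m')" by (cases x) auto
    have sj: "s \<le> j" and mn: "m < n" and mn': "m' < n" using xA xe by auto
    have "p k s m * p (D-1) (j - s) m' * p m m' 1 =
      (if (s, m, m') = (j, 1, D-1) then p k j 1 * p 1 (D-1) 1 else 0) +
      (if (s, m, m') = (0, k, j) then of_nat j * p k j 1 * p k j 1 else 0)"
    proof (cases "s = j")
      case True
      show ?thesis
      proof (cases "m = 1")
        case m1: True
        show ?thesis
        proof (cases "m' = D - 1")
          case True then show ?thesis using m1 \<open>s = j\<close> v5 j1 by simp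
        next
          case False
          have "p (D-1) 0 m' * p 1 m' 1 = 0"
          proof (cases "m' = 0")
            case True then show ?thesis using cz[of "D-1" 0] Dn D1 by simp
          next
            case m0: False
            show ?thesis
            proof (cases "m' < D - 1")
              case True then show ?thesis using Hz[of 1 m'] m0 mn' n2 by simp
            next
              case False
              then have "D - 1 < m'" using \<open>m' \<noteq> D - 1\<close> by simp
              then show ?thesis using F0a[of m' "D-1"] mn' Dn by simp
            qed
          qed
          then show ?thesis using m1 \<open>s = j\<close> False j1 by simp
        qed
      next
        case False
        have "p k j m = 0"
        proof (cases "m = 0")
          case True then show ?thesis using cz kn jn j1 by simp
        next
          case m0: False
          then show ?thesis using Vz[of k j m] kn jn j1 mn kj False by simp
        qed
        then show ?thesis using \<open>s = j\<close> False j1 by simp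
      qed
    next
      case snj: False
      show ?thesis
      proof (cases "s = 0")
        case s0: True
        have js: "j - s = j" using s0 by simp
        show ?thesis
        proof (cases "m = k \<and> m' = j")
          case True then show ?thesis using s0 pkk v1 j1 by simp
        next
          case False
          have "p k 0 m * p (D-1) j m' * p m m' 1 = 0"
          proof (cases "m' = 0")
            case True then show ?thesis using cz[of "D-1" j] Dn jn j1 by simp
          next
            case m'0: False
            show ?thesis
            proof (cases "m = 0")
              case True then show ?thesis using cz[of k 0] kn k1 by simp
            next
              case m0: False
              show ?thesis
              proof (cases "k < m")
                case True then show ?thesis using F0a[of m k] mn kn by simp
              next
                case mk: False
                show ?thesis
                proof (cases "j < m'")
                  case True
                  then have "p (D-1) j m' = 0" using Vz[of "D-1" j m'] Dn jn j1 mn' D2 by simp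
                  then show ?thesis by simp
                next
                  case False
                  then have "m + m' < D" using mk \<open>\<not> (m = k \<and> m' = j)\<close> kj by auto
                  then show ?thesis using Hz[of m m'] m0 m'0 mn mn' by simp
                qed
              qed
            qed
          qed
          then show ?thesis using s0 False snj by auto
        qed
      next
        case False
        have "p k s m = 0"
        proof (cases "m = 0")
          case True then show ?thesis using cz[of k s] kn jn sj False by simp
        next
          case m0: False
          show ?thesis using Vz[of k s m] kn jn sj False mn m0 snj kj by simp
        qed
        then show ?thesis using False snj by simp
      qed
    qed
    then show "p k (fst x) (fst (snd x)) * p (D-1) (j - fst x) (snd (snd x)) * p (fst (snd x)) (snd (snd x)) 1 =
      (if x = (j, 1, D-1) then p k j 1 * p 1 (D-1) 1 else 0) +
      (if x = (0, k, j) then of_nat j * p k j 1 * p k j 1 else 0)" using xe by simp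
  qed (use n2 Dn kn jn in auto)
  have R: "(\<Sum>s\<le>D-1. \<Sum>m<n. \<Sum>m'<n. p k (D-1 - s) m * p j s m' * p m m' 1)
      = of_nat j * p 1 (D-1) 1 * p k j 1 + of_nat k * p 1 (D-1) 1 * p k j 1"
    unfolding sum3_cart
  proof (rule sum_pts2[where xa="(D-1, k, j)" and xb="(0, k, j)"])
    fix x assume xA: "x \<in> {..D-1} \<times> {..<n} \<times> {..<n}"
    obtain s m m' where xe: "x = (s, m, m')" by (cases x) auto
    have sD: "s \<le> D-1" and mn: "m < n" and mn': "m' < n" using xA xe by auto
    have sn: "s < n" "D - 1 - s < n" using sD Dn by auto
    have "p k (D-1 - s) m * p j s m' * p m m' 1 =
      (if (s, m, m') = (D-1, k, j) then of_nat j * p 1 (D-1) 1 * p k j 1 else 0) +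
      (if (s, m, m') = (0, k, j) then of_nat k * p 1 (D-1) 1 * p k j 1 else 0)"
    proof (cases "m = k \<and> m' = j \<and> (s = D - 1 \<or> s = 0)")
      case True
      then show ?thesis
      proof (elim conjE disjE)
        assume "m = k" "m' = j" "s = D - 1"
        then show ?thesis using pkk v2 D1 by simp
      next
        assume "m = k" "m' = j" "s = 0"
        then show ?thesis using pjj v3 D1 by simp
      qed
    next
      case notpt: False
      have "p k (D-1 - s) m * p j s m' * p m m' 1 = 0"
      proof (cases "m = 0")
        case True then show ?thesis using cz[of k "D-1-s"] kn sn k1 by simp
      next
        case m0: False
        show ?thesis
        proof (cases "m' = 0")
          case True then show ?thesis using cz[of j s] jn sn j1 by simp
        next
          case m'0: False
          show ?thesis
          proof (cases "m + m' < D")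
            case True then show ?thesis using Hz[of m m'] m0 m'0 mn mn' by simp
          next
            case big: False
            show ?thesis
            proof (cases "s = D - 1")
              case True
              have "\<not> m \<le> k \<or> \<not> m' \<le> j" using notpt big kj True by auto
              then show ?thesis
              proof
                assume "\<not> m \<le> k"
                then show ?thesis using F0a[of m k] mn kn True by simp
              next
                assume "\<not> m' \<le> j"
                then have "p j s m' = 0" using Vz[of j s m'] jn sn True D1 mn' by simp
                then show ?thesis by simp
              qed
            next
              case sD1: False
              show ?thesis
              proof (cases "s = 0")
                case True
                have "\<not> m \<le> k \<or> \<not> m' \<le> j" using notpt big kj True by auto
                then show ?thesis
                proof
                  assume "\<not> m \<le> k"
                  then have "p k (D - 1 - s) m = 0" using Vz[of k "D-1-s" m] kn sn True D1 mn by simp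
                  then show ?thesis by simp
                next
                  assume "\<not> m' \<le> j"
                  then show ?thesis using F0a[of m' j] mn' jn True by simp
                qed
              next
                case s0: False
                have t1: "1 \<le> D - 1 - s" using sD1 sD by auto
                show ?thesis
                proof (cases "k + (D - 1 - s) < D + m - 1")
                  case True
                  then have "p k (D - 1 - s) m = 0" using Vz[of k "D-1-s" m] kn sn t1 mn by simp
                  then show ?thesis by simp
                next
                  case False
                  have "j + s < D + m' - 1" using False big kj sD D2 by linarith
                  then have "p j s m' = 0" using Vz[of j s m'] jn sn s0 mn' by simp
                  then show ?thesis by simp
                qed
              qed
            qed
          qed
        qed
      qed
      then show ?thesis using notpt by auto
    qed
    then show "p k (D-1 - fst x) (fst (snd x)) * p j (fst x) (snd (snd x)) * p (fst (snd x)) (snd (snd x)) 1 =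
      (if x = (D-1, k, j) then of_nat j * p 1 (D-1) 1 * p k j 1 else 0) +
      (if x = (0, k, j) then of_nat k * p 1 (D-1) 1 * p k j 1 else 0)" using xe by simp
  qed (use n2 Dn kn jn in auto)
  have "(\<Sum>s\<le>j. \<Sum>m<n. \<Sum>m'<n. p k s m * p (D-1) (j - s) m' * p m m' 1) =
        (\<Sum>s\<le>D-1. \<Sum>m<n. \<Sum>m'<n. p k (D-1 - s) m * p j s m' * p m m' 1)"
    using cyc_eq[OF kn jn Dn] .
  then have "p k j 1 * p 1 (D-1) 1 + of_nat j * p k j 1 * p k j 1 = of_nat j * p 1 (D-1) 1 * p k j 1 + of_nat k * p 1 (D-1) 1 * p k j 1"
    using L R by simp
  also have "\<dots> = of_nat D * p 1 (D-1) 1 * p k j 1"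
  proof -
    have e: "(of_nat D::'a) = of_nat j + of_nat k" using kj by (simp flip: of_nat_add add: add.commute)
    show ?thesis unfolding e by (simp add: algebra_simps)
  qed
  finally show ?thesis .
qed

lemma Hall:
  assumes v0n: "v0 < n" and p1z: "\<And>i. 0 < i \<Longrightarrow> i < v0 \<Longrightarrow> p 1 i 1 = 0"
  shows "2 \<le> D \<Longrightarrow> D \<le> v0 + 1 \<Longrightarrow> (\<forall>x y. 1 \<le> x \<longrightarrow> 1 \<le> y \<longrightarrow> x + y < D \<longrightarrow> x < n \<longrightarrow> y < n \<longrightarrow> p x y 1 = 0)"
proof (induction D)
  case 0 then show ?case by simp
next
  case (Suc D)
  show ?case
  proof (cases "D < 2")
    case True
    then show ?thesis by auto
  next
    case False
    then have D2: "2 \<le> D" by simp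
    have IH: "\<And>x y. 1 \<le> x \<Longrightarrow> 1 \<le> y \<Longrightarrow> x + y < D \<Longrightarrow> x < n \<Longrightarrow> y < n \<Longrightarrow> p x y 1 = 0"
      using Suc.IH D2 Suc.prems by auto
    have Dv: "D \<le> v0" using Suc.prems by simp
    show ?thesis
    proof (intro allI impI)
      fix x y assume x1: "1 \<le> x" and y1: "1 \<le> y" and xy: "x + y < Suc D" and xn: "x < n" and yn: "y < n"
      show "p x y 1 = 0"
      proof (cases "x + y < D")
        case True then show ?thesis using IH x1 y1 xn yn by blast
      next
        case False
        then have xyD: "x + y = D" using xy by simp
        show ?thesis
        proof (cases "x = 1")
          case True
          then show ?thesis using p1z[of y] xyD Dv y1 by simp
        next
          case False
          have p1D: "p 1 (D - 1) 1 = 0" using p1z[of "D-1"] D2 Dv by simp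
          have "p x y 1 * p 1 (D-1) 1 + of_nat y * p x y 1 * p x y 1 = of_nat D * p 1 (D-1) 1 * p x y 1"
            using Qeq[OF D2 IH x1 y1 xyD] Dv v0n by simp
          then have "of_nat y * (p x y 1 * p x y 1) = 0" using p1D by (simp add: algebra_simps)
          then show ?thesis using y1 by simp
        qed
      qed
    qed
  qed
qed

lemma Seq:
  assumes r2: "2 \<le> r" and rn: "r < n" and fz: "\<And>k. 1 < k \<Longrightarrow> k < r \<Longrightarrow> k < n \<Longrightarrow> p k 0 1 = 0"
    and v1: "1 \<le> v0" and v0n: "v0 < n" and p1z: "\<And>i. 0 < i \<Longrightarrow> i < v0 \<Longrightarrow> p 1 i 1 = 0"
    and H: "\<And>x y. 1 \<le> x \<Longrightarrow> 1 \<le> y \<Longrightarrow> x + y < v0 + 1 \<Longrightarrow> x < n \<Longrightarrow> y < n \<Longrightarrow> p x y 1 = 0"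
  shows "p r 0 1 * p 1 v0 1 + p r v0 1 + of_nat (v0 + 1 - r) * p r 0 1 * p r (v0 + 1 - r) 1
       = p r v0 1 + of_nat r * p 1 v0 1 * p r 0 1"
proof -
  define s where "s = v0 + 1 - r"
  have sv: "s < v0" using s_def r2 v1 by auto
  have sn: "s < n" using sv v0n by auto
  have FP: "\<And>m. m < n \<Longrightarrow> (\<forall>i<n. (i < m + r - 1 \<longrightarrow> p i 0 m = (if i = m then 1 else 0)) \<and>
      (i = m + r - 1 \<longrightarrow> p i 0 m = of_nat m * p r 0 1))"
    using Fpow[OF r2 fz] by blast
  have FPa: "\<And>i m. m < n \<Longrightarrow> i < n \<Longrightarrow> i < m + r - 1 \<Longrightarrow> p i 0 m = (if i = m then 1 else 0)"
    using FP by blast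
  have FPb: "\<And>i m. m < n \<Longrightarrow> i < n \<Longrightarrow> i = m + r - 1 \<Longrightarrow> p i 0 m = of_nat m * p r 0 1"
    using FP by blast
  have D2: "2 \<le> v0 + 1" using v1 by simp
  have VV: "\<And>m. m < n \<Longrightarrow> (\<forall>i t. i < n \<longrightarrow> t < n \<longrightarrow> 1 \<le> t \<longrightarrow>
      (i + t < (v0 + 1) + m - 1 \<longrightarrow> p i t m = 0) \<and>
      (i + t = (v0 + 1) + m - 1 \<longrightarrow> p i t m = of_nat m * p (i + 1 - m) t 1))"
    using V[OF D2 H] by blast
  have Vz: "\<And>i t m. i < n \<Longrightarrow> t < n \<Longrightarrow> 1 \<le> t \<Longrightarrow> m < n \<Longrightarrow> i + t < (v0 + 1) + m - 1 \<Longrightarrow> p i t m = 0"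
    using VV by blast
  have Vb: "\<And>i t m. i < n \<Longrightarrow> t < n \<Longrightarrow> 1 \<le> t \<Longrightarrow> m < n \<Longrightarrow> i + t = (v0 + 1) + m - 1 \<Longrightarrow> p i t m = of_nat m * p (i + 1 - m) t 1"
    using VV by blast
  have cz: "\<And>i t. i < n \<Longrightarrow> t < n \<Longrightarrow> (i \<noteq> 0 \<or> t \<noteq> 0) \<Longrightarrow> p i t 0 = 0"
    using counit by auto
  have prr: "p r 0 r = 1" using F0b rn by simp
  have pvv: "p v0 0 v0 = 1" using F0b v0n by simp
  have pr1: "p r 0 1 = p r 0 1" ..
  have pr0: "\<And>m. m < n \<Longrightarrow> m \<noteq> 1 \<Longrightarrow> m \<noteq> r \<Longrightarrow> p r 0 m = 0"
  proof -
    fix m assume "m < n" "m \<noteq> 1" "m \<noteq> r"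
    show "p r 0 m = 0"
    proof (cases "m = 0")
      case True then show ?thesis using cz rn r2 by simp
    next
      case False
      then show ?thesis using FPa[of m r] \<open>m < n\<close> \<open>m \<noteq> 1\<close> \<open>m \<noteq> r\<close> rn by simp
    qed
  qed
  have pr1b: "p r 0 1 = of_nat 1 * p r 0 1" by simp
  have pvs: "p v0 0 s = of_nat s * p r 0 1"
  proof (cases "s = 0")
    case True then show ?thesis using cz v0n v1 by simp
  next
    case False
    then have "v0 = s + r - 1" using s_def by auto
    then show ?thesis using FPb[of s v0] sn v0n by simp
  qed
  have L: "(\<Sum>m<n. \<Sum>m'<n. p r 0 m * p v0 0 m' * p m m' 1)
     = p r 0 1 * p 1 v0 1 + p r v0 1 + of_nat s * p r 0 1 * p r s 1"
    unfolding sum2_cart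
  proof (rule sum_pts3[where xa="(1, v0)" and xb="(r, v0)" and xc="(r, s)"])
    fix x assume xA: "x \<in> {..<n} \<times> {..<n}"
    obtain m m' where xe: "x = (m, m')" by (cases x) auto
    have mn: "m < n" and mn': "m' < n" using xA xe by auto
    have "p r 0 m * p v0 0 m' * p m m' 1 =
       (if (m, m') = (1, v0) then p r 0 1 * p 1 v0 1 else 0) +
       (if (m, m') = (r, v0) then p r v0 1 else 0) +
       (if (m, m') = (r, s) then of_nat s * p r 0 1 * p r s 1 else 0)"
    proof (cases "m = 1 \<or> m = r")
      case False
      then show ?thesis using pr0[OF mn] by auto
    next
      case mr: True
      show ?thesis
      proof (cases "m' = v0")
        case True
        then show ?thesis using mr pvv prr sv r2 by auto
      next
        case mv: False
        show ?thesis
        proof (cases "m' = s")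
          case True
          show ?thesis
          proof (cases "m = 1")
            case True
            have "p v0 0 s * p 1 s 1 = 0"
            proof (cases "s = 0")
              case True then show ?thesis using cz v0n v1 by simp
            next
              case False then show ?thesis using p1z[of s] sv by simp
            qed
            then show ?thesis using True \<open>m' = s\<close> mv r2 by auto
          next
            case False
            then have "m = r" using mr by simp
            then show ?thesis using prr pvs \<open>m' = s\<close> mv r2 by auto
          qed
        next
          case ms: False
          have "p v0 0 m' * p m m' 1 = 0"
          proof (cases "v0 < m' + r - 1")
            case True then show ?thesis using FPa[of m' v0] mn' v0n mv by simp
          next
            case False
            then have "m' < s" using ms s_def by auto
            show ?thesis
            proof (cases "m' = 0")
              case True then show ?thesis using cz v0n v1 by simp
            next
              case m0: False
              have "p m m' 1 = 0"
              proof (cases "m = 1")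
                case True then show ?thesis using p1z[of m'] \<open>m' < s\<close> sv m0 by simp
              next
                case False
                then have "m = r" using mr by simp
                then show ?thesis using H[of r m'] r2 m0 \<open>m' < s\<close> s_def rn mn' by simp
              qed
              then show ?thesis by simp
            qed
          qed
          then show ?thesis using mv ms by auto
        qed
      qed
    qed
    then show "p r 0 (fst x) * p v0 0 (snd x) * p (fst x) (snd x) 1 =
       (if x = (1, v0) then p r 0 1 * p 1 v0 1 else 0) +
       (if x = (r, v0) then p r v0 1 else 0) +
       (if x = (r, s) then of_nat s * p r 0 1 * p r s 1 else 0)" using xe by simp
  qed (use n2 rn v0n sn in auto)
  have R: "(\<Sum>s'\<le>v0. \<Sum>m<n. \<Sum>m'<n. p r (v0 - s') m * p 0 s' m' * p m m' 1)
     = p r v0 1 + of_nat r * p 1 v0 1 * p r 0 1"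
    unfolding sum3_cart
  proof (rule sum_pts2[where xa="(0, 1, 0)" and xb="(0, r, 0)"])
    fix x assume xA: "x \<in> {..v0} \<times> {..<n} \<times> {..<n}"
    obtain s' m m' where xe: "x = (s', m, m')" by (cases x) auto
    have sv': "s' \<le> v0" and mn: "m < n" and mn': "m' < n" using xA xe by auto
    have "p r (v0 - s') m * p 0 s' m' * p m m' 1 =
       (if (s', m, m') = (0, 1, 0) then p r v0 1 else 0) +
       (if (s', m, m') = (0, r, 0) then of_nat r * p 1 v0 1 * p r 0 1 else 0)"
    proof (cases "s' = 0 \<and> m' = 0")
      case False
      have "p 0 s' m' = 0"
      proof (cases "m' = 0")
        case True then show ?thesis using cz[of 0 s'] False sv' v0n by simp
      next
        case False then show ?thesis using Z0[of m' s'] mn' sv' v0n by simp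
      qed
      then show ?thesis using False by auto
    next
      case True
      then have s0: "s' = 0" and m'0: "m' = 0" by auto
      have p00: "p 0 0 0 = 1" using counit n2 by simp
      show ?thesis
      proof (cases "m = 1")
        case True then show ?thesis using s0 m'0 p00 p101 r2 by simp
      next
        case m1: False
        show ?thesis
        proof (cases "m = r")
          case True
          have "p r v0 r = of_nat r * p 1 v0 1" using Vb[of r v0 r] rn v0n v1 by simp
          then show ?thesis using True s0 m'0 p00 r2 by simp
        next
          case mr: False
          have "p r v0 m * p m 0 1 = 0"
          proof (cases "m = 0")
            case True then show ?thesis using cz rn v0n v1 by simp
          next
            case m0: False
            show ?thesis
            proof (cases "m < r")
              case True then show ?thesis using fz[of m] m0 m1 mn by simp
            next
              case False
              then have "p r v0 m = 0" using Vz[of r v0 m] rn v0n v1 mn mr by simp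
              then show ?thesis by simp
            qed
          qed
          then show ?thesis using s0 m'0 p00 m1 mr by simp
        qed
      qed
    qed
    then show "p r (v0 - fst x) (fst (snd x)) * p 0 (fst x) (snd (snd x)) * p (fst (snd x)) (snd (snd x)) 1 =
       (if x = (0, 1, 0) then p r v0 1 else 0) +
       (if x = (0, r, 0) then of_nat r * p 1 v0 1 * p r 0 1 else 0)" using xe by simp
  qed (use n2 rn r2 in auto)
  have "(\<Sum>s'\<le>0. \<Sum>m<n. \<Sum>m'<n. p r s' m * p v0 (0 - s') m' * p m m' 1) =
        (\<Sum>s'\<le>v0. \<Sum>m<n. \<Sum>m'<n. p r (v0 - s') m * p 0 s' m' * p m m' 1)"
    using cyc_eq[of r 0 v0] rn v0n n2 by simp
  then show ?thesis using L R s_def by simp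
qed

end

theorem proposition5p2:
  fixes p :: "nat \<Rightarrow> nat \<Rightarrow> nat \<Rightarrow> 'a::field_char_0"
    and n v0 :: nat
  assumes "alg_closed_type TYPE('a)"
    and "n \<ge> 2"
    and "1 < v0" and "v0 < n"
    and "regular_q_cycle_coalg n p p"
    and "p 1 0 1 = 1"
    and "\<forall>i. 0 < i \<and> i < v0 \<longrightarrow> p 1 i 1 = 0"
    and "p 1 v0 1 \<noteq> 0"
  shows "\<forall>j<n. \<forall>k<n. p j 0 k = kdelta k j"
proof -
  have cm: "coalg_morph2 n p" using assms(5) unfolding regular_q_cycle_coalg_def regular_q_magma_coalg_def by blast
  interpret cyc2 p n
    by unfold_locales (use cm assms(2,5,6) in auto)
  have v0n: "v0 < n" and v1: "1 \<le> v0" using assms(3,4) by auto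
  have p1z: "\<And>i. 0 < i \<Longrightarrow> i < v0 \<Longrightarrow> p 1 i 1 = 0" using assms(7) by blast
  have H: "\<And>x y. 1 \<le> x \<Longrightarrow> 1 \<le> y \<Longrightarrow> x + y < v0 + 1 \<Longrightarrow> x < n \<Longrightarrow> y < n \<Longrightarrow> p x y 1 = 0"
    using Hall[OF v0n p1z, of "v0 + 1"] assms(3) by auto
  define g where "g = p 1 v0 1"
  have g0: "g \<noteq> 0" using assms(8) g_def by simp
  have fz: "\<And>k. 1 < k \<Longrightarrow> k < n \<Longrightarrow> p k 0 1 = 0"
  proof (rule ccontr)
    fix k assume k: "1 < k" "k < n" "p k 0 1 \<noteq> 0"
    define r where "r = (LEAST r. 1 < r \<and> r < n \<and> p r 0 1 \<noteq> 0)"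
    have rP: "1 < r \<and> r < n \<and> p r 0 1 \<noteq> 0" unfolding r_def
      by (rule LeastI[of _ k]) (use k in auto)
    have fzr: "\<And>k. 1 < k \<Longrightarrow> k < r \<Longrightarrow> k < n \<Longrightarrow> p k 0 1 = 0"
    proof -
      fix k assume "1 < k" "k < r" "k < n"
      then have "\<not> (1 < k \<and> k < n \<and> p k 0 1 \<noteq> 0)" unfolding r_def using not_less_Least by blast
      then show "p k 0 1 = 0" using \<open>1 < k\<close> \<open>k < n\<close> by auto
    qed
    have r2: "2 \<le> r" and rn: "r < n" and fr0: "p r 0 1 \<noteq> 0" using rP by auto
    define s where "s = v0 + 1 - r"
    define P where "P = p r s 1"
    define fr where "fr = p r 0 1"
    have fr0': "fr \<noteq> 0" using fr0 fr_def by simp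
    have S: "fr * g + p r v0 1 + of_nat s * fr * P = p r v0 1 + of_nat r * g * fr"
      using Seq[OF r2 rn fzr v1 v0n p1z H] unfolding s_def P_def fr_def g_def by simp
    then have "fr * (g + of_nat s * P - of_nat r * g) = 0" by (simp add: algebra_simps)
    then have E1: "g + of_nat s * P = of_nat r * g" using fr0' by simp
    have rne1: "(of_nat r :: 'a) \<noteq> 1" using r2 by (metis of_nat_1 of_nat_eq_iff numeral_le_one_iff semiring_norm(69) one_le_numeral order.trans nat_le_linear less_irrefl Suc_1 not_less_eq_eq)
    have contra: "g = of_nat r * g \<Longrightarrow> False"
    proof -
      assume "g = of_nat r * g"
      then have "(of_nat r - 1) * g = 0" by (simp add: algebra_simps)
      then show False using g0 rne1 by simp
    qed
    show False
    proof (cases "s = 0")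
      case True
      then show False using E1 contra by simp
    next
      case False
      then have s1: "1 \<le> s" and rs: "r + s = v0 + 1" and rv: "r \<le> v0" using s_def by auto
      have Q: "P * g + of_nat s * P * P = of_nat (v0 + 1) * g * P"
        using Qeq[of "v0 + 1" r s] H v1 r2 s1 rs v0n unfolding P_def g_def by simp
      have "P * g + (of_nat s * P) * P = of_nat (v0 + 1) * g * P" using Q by (simp add: algebra_simps)
      then have "P * g + (of_nat r * g - g) * P = of_nat (v0 + 1) * g * P" using E1
        by (metis add_diff_cancel_left')
      then have "(of_nat r - of_nat (v0 + 1)) * g * P = 0" by (simp add: algebra_simps)
      moreover have "(of_nat r :: 'a) \<noteq> of_nat (v0 + 1)" using rv by (simp only: of_nat_eq_iff)
      ultimately have "P = 0" using g0 by simp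
      then show False using E1 contra by simp
    qed
  qed
  show ?thesis
  proof (intro allI impI)
    fix j k assume "j < n" "k < n"
    then show "p j 0 k = kdelta k j" using Fid[OF fz] unfolding kdelta_def by auto
  qed
qed

end
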